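(* Let $m,j$ be positive integers and suppose that the outcome class of $G_{m,j}$ is $H$ or $2$. Then there exists $N_0$ such that for all integers $N\ge N_0$, the outcome class of $G_{m,N\gcd(j,2m)}$ is $H$.
   Context: Domineering is a two-player game played on a rectangular grid of unit squares. The players alternate placing dominoes, each covering two adjacent unoccupied squares; the player Vertical must place dominoes vertically (covering two squares in the same column), and the player Horizontal must place them horizontally (covering two squares in the same row). A player with no legal move on her turn loses. $G_{m,n}$ denotes the empty board with vertical dimension $m$ (number of rows) and horizontal dimension $n$ (number of columns). Every position has one of four outcome classes under optimal play: $V$ (Vertical wins whoever moves first), $H$ (Horizontal wins whoever moves first), $1$ (the player who moves first wins), $2$ (the player who moves second wins). *)

theory Defs
  imports Main
begin

text \<open>Cells are (row, column) pairs. A position is the set of unoccupied cells.\<close>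

type_synonym cell = "nat \<times> nat"

datatype player = Vertical | Horizontal

fun other :: "player \<Rightarrow> player" where
  "other Vertical = Horizontal"
| "other Horizontal = Vertical"

definition grid :: "nat \<Rightarrow> nat \<Rightarrow> cell set" where
  "grid m n = {(r, c). r < m \<and> c < n}"

fun domino :: "player \<Rightarrow> cell \<Rightarrow> cell set" where
  "domino Vertical (r, c) = {(r, c), (Suc r, c)}"
| "domino Horizontal (r, c) = {(r, c), (r, Suc c)}"

definition moves :: "player \<Rightarrow> cell set \<Rightarrow> cell set set" where
  "moves p S = {S - domino p x | x. domino p x \<subseteq> S}"

text \<open>wins_fuel n p S: player p, moving first on free set S, has a winning strategy
  (normal play), exploring at most n moves; fuel card S always suffices since each
  move removes two cells.\<close>
fun wins_fuel :: "nat \<Rightarrow> player \<Rightarrow> cell set \<Rightarrow> bool" where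
  "wins_fuel 0 p S = False"
| "wins_fuel (Suc n) p S = (\<exists>S' \<in> moves p S. \<not> wins_fuel n (other p) S')"

definition wins_first :: "player \<Rightarrow> cell set \<Rightarrow> bool" where
  "wins_first p S = wins_fuel (card S) p S"

datatype outcome = OutV | OutH | OutFirst | OutSecond

definition outcome :: "cell set \<Rightarrow> outcome" where
  "outcome S =
    (if wins_first Vertical S \<and> wins_first Horizontal S then OutFirst
     else if \<not> wins_first Vertical S \<and> \<not> wins_first Horizontal S then OutSecond
     else if wins_first Vertical S then OutV
     else OutH)"

end

theory Submission
  imports Defs
begin

lemma domino_card: "card (domino p x) = 2"
  by (cases p; cases x) auto

lemma domino_fin: "finite (domino p x)"
  by (cases p; cases x) auto

lemma domino_ne: "domino p x \<noteq> {}"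
  by (cases p; cases x) auto

lemma moves_empty: "moves p {} = {}"
  using domino_ne unfolding moves_def by auto

lemma moves_props:
  assumes "S' \<in> moves p S" "finite S"
  shows "card S' + 2 = card S \<and> finite S' \<and> S' \<subseteq> S"
proof -
  obtain x where x: "S' = S - domino p x" "domino p x \<subseteq> S"
    using assms(1) unfolding moves_def by auto
  have "card S' = card S - 2" using x assms(2) domino_card domino_fin
    by (simp add: card_Diff_subset)
  moreover have "card (domino p x) \<le> card S" using x assms(2) by (simp add: card_mono)
  ultimately show ?thesis using x assms(2) domino_card by auto
qed

lemma fuel:
  "finite S \<Longrightarrow> card S \<le> n \<Longrightarrow> card S \<le> n' \<Longrightarrow> wins_fuel n p S = wins_fuel n' p S"
proof (induction n arbitrary: n' p S)
  case 0
  then have "S = {}" by auto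
  then show ?case by (cases n') (auto simp: moves_empty)
next
  case (Suc n)
  show ?case
  proof (cases n')
    case 0
    then have "S = {}" using Suc by auto
    then show ?thesis using 0 by (auto simp: moves_empty)
  next
    case (Suc n'')
    have "\<forall>S'\<in>moves p S. wins_fuel n (other p) S' = wins_fuel n'' (other p) S'"
    proof
      fix S' assume "S' \<in> moves p S"
      from moves_props[OF this \<open>finite S\<close>] show "wins_fuel n (other p) S' = wins_fuel n'' (other p) S'"
        using Suc.prems Suc.IH \<open>n' = Suc n''\<close> by auto
    qed
    then show ?thesis using Suc by auto
  qed
qed

lemma wins_rec:
  assumes "finite S"
  shows "wins_first p S \<longleftrightarrow> (\<exists>S'\<in>moves p S. \<not> wins_first (other p) S')"
proof (cases "S = {}")
  case True
  then show ?thesis by (simp add: wins_first_def moves_empty)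
next
  case False
  then obtain k where k: "card S = Suc k" using assms
    by (metis card_0_eq not0_implies_Suc)
  have "\<forall>S'\<in>moves p S. wins_fuel k (other p) S' = wins_first (other p) S'"
  proof
    fix S' assume "S' \<in> moves p S"
    from moves_props[OF this assms] show "wins_fuel k (other p) S' = wins_first (other p) S'"
      unfolding wins_first_def using k fuel[of S' k "card S'"] by auto
  qed
  then show ?thesis unfolding wins_first_def using k by auto
qed


lemma moves_I: "domino p x \<subseteq> S \<Longrightarrow> S - domino p x \<in> moves p S"
  unfolding moves_def by blast

definition sh :: "nat \<Rightarrow> cell \<Rightarrow> cell" where
  "sh d = (\<lambda>(r,c). (r, c+d))"

lemma sh_inj: "inj (sh d)"
  unfolding sh_def inj_def by auto

lemma sh_domino: "sh d ` domino p x = domino p (sh d x)"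
  by (cases p; cases x) (auto simp: sh_def)

lemma moves_sh: "moves p (sh d ` S) = (image (sh d)) ` moves p S"
proof
  show "moves p (sh d ` S) \<subseteq> (image (sh d)) ` moves p S"
  proof
    fix T assume "T \<in> moves p (sh d ` S)"
    then obtain z where z: "T = sh d ` S - domino p z" "domino p z \<subseteq> sh d ` S"
      unfolding moves_def by auto
    obtain r c where zrc: "z = (r,c)" by (cases z)
    have "z \<in> domino p z" by (cases p) (auto simp: zrc)
    then have "z \<in> sh d ` S" using z by auto
    then have "d \<le> c" using zrc by (auto simp: sh_def)
    then have zz: "z = sh d (r, c - d)" using zrc by (auto simp: sh_def)
    have "sh d ` domino p (r, c-d) \<subseteq> sh d ` S" using z zz sh_domino by metis
    then have sub: "domino p (r, c-d) \<subseteq> S" using sh_inj by (simp add: inj_image_subset_iff)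
    have "T = sh d ` (S - domino p (r, c-d))"
      using z zz sh_domino sh_inj by (metis image_set_diff)
    then show "T \<in> (image (sh d)) ` moves p S" using sub unfolding moves_def by auto
  qed
next
  show "(image (sh d)) ` moves p S \<subseteq> moves p (sh d ` S)"
  proof
    fix T assume "T \<in> (image (sh d)) ` moves p S"
    then obtain x where x: "T = sh d ` (S - domino p x)" "domino p x \<subseteq> S"
      unfolding moves_def by auto
    have "T = sh d ` S - domino p (sh d x)" using x sh_domino sh_inj by (metis image_set_diff)
    moreover have "domino p (sh d x) \<subseteq> sh d ` S" using x sh_domino by (metis image_mono)
    ultimately show "T \<in> moves p (sh d ` S)" using moves_I by metis
  qed
qed

lemma win_sh: "finite S \<Longrightarrow> wins_first p (sh d ` S) = wins_first p S"
proof (induction "card S" arbitrary: S p rule: less_induct)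
  case less
  have "wins_first p (sh d ` S) \<longleftrightarrow> (\<exists>S'\<in>moves p (sh d ` S). \<not> wins_first (other p) S')"
    using wins_rec less.prems by simp
  also have "\<dots> \<longleftrightarrow> (\<exists>T\<in>moves p S. \<not> wins_first (other p) (sh d ` T))"
    by (simp add: moves_sh)
  also have "\<dots> \<longleftrightarrow> (\<exists>T\<in>moves p S. \<not> wins_first (other p) T)"
  proof -
    have "\<forall>T\<in>moves p S. wins_first (other p) (sh d ` T) = wins_first (other p) T"
    proof
      fix T assume "T \<in> moves p S"
      from moves_props[OF this less.prems] show "wins_first (other p) (sh d ` T) = wins_first (other p) T"
        using less.hyps by auto
    qed
    then show ?thesis by auto
  qed
  also have "\<dots> \<longleftrightarrow> wins_first p S" using wins_rec less.prems by simp
  finally show ?case .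
qed

definition sep :: "cell set \<Rightarrow> cell set \<Rightarrow> bool" where
  "sep A B = (\<forall>a\<in>A. \<forall>b\<in>B. snd a \<noteq> snd b)"

lemma sep_V: "sep A B \<Longrightarrow> domino Vertical x \<subseteq> A \<union> B \<Longrightarrow> domino Vertical x \<subseteq> A \<or> domino Vertical x \<subseteq> B"
  unfolding sep_def by (cases x) fastforce

lemma sum_good:
  "finite A \<Longrightarrow> finite B \<Longrightarrow> A \<inter> B = {} \<Longrightarrow> sep A B \<Longrightarrow>
   \<not> wins_first Vertical A \<Longrightarrow> \<not> wins_first Vertical B \<Longrightarrow> \<not> wins_first Vertical (A \<union> B)"
proof (induction "card A + card B" arbitrary: A B rule: less_induct)
  case less
  have fin: "finite (A \<union> B)" using less.prems by auto
  have "\<forall>S'\<in>moves Vertical (A \<union> B). wins_first Horizontal S'"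
  proof
    fix S' assume "S' \<in> moves Vertical (A \<union> B)"
    then obtain x where x: "S' = (A \<union> B) - domino Vertical x" "domino Vertical x \<subseteq> A \<union> B"
      unfolding moves_def by auto
    let ?D = "domino Vertical x"
    from sep_V[OF less.prems(4) x(2)] show "wins_first Horizontal S'"
    proof
      assume DA: "?D \<subseteq> A"
      have "A - ?D \<in> moves Vertical A" using DA by (rule moves_I)
      then have "wins_first Horizontal (A - ?D)"
        using less.prems(5) wins_rec[OF less.prems(1), of Vertical] by auto
      then obtain A'' where A'': "A'' \<in> moves Horizontal (A - ?D)" "\<not> wins_first Vertical A''"
        using wins_rec[of "A - ?D" Horizontal] less.prems(1) by auto
      then obtain y where y: "A'' = (A - ?D) - domino Horizontal y" "domino Horizontal y \<subseteq> A - ?D"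
        unfolding moves_def by auto
      have eq: "S' - domino Horizontal y = A'' \<union> B" using x y less.prems(3) DA by auto
      have mv: "S' - domino Horizontal y \<in> moves Horizontal S'" using x y by (intro moves_I) auto
      have pA: "card (A - ?D) + 2 = card A" "finite (A - ?D)"
        using moves_props[OF \<open>A - ?D \<in> moves Vertical A\<close> less.prems(1)] by auto
      have pA'': "card A'' + 2 = card (A - ?D)" "finite A''" "A'' \<subseteq> A - ?D"
        using moves_props[OF A''(1) pA(2)] by auto
      have "\<not> wins_first Vertical (A'' \<union> B)"
        apply (rule less.hyps[of A'' B])
        using pA pA'' less.prems A''(2) unfolding sep_def by auto
      then show "wins_first Horizontal S'" using wins_rec[of S' Horizontal] mv eq fin x by auto
    next
      assume DB: "?D \<subseteq> B"
      have "B - ?D \<in> moves Vertical B" using DB by (rule moves_I)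
      then have "wins_first Horizontal (B - ?D)"
        using less.prems(6) wins_rec[OF less.prems(2), of Vertical] by auto
      then obtain B'' where B'': "B'' \<in> moves Horizontal (B - ?D)" "\<not> wins_first Vertical B''"
        using wins_rec[of "B - ?D" Horizontal] less.prems(2) by auto
      then obtain y where y: "B'' = (B - ?D) - domino Horizontal y" "domino Horizontal y \<subseteq> B - ?D"
        unfolding moves_def by auto
      have eq: "S' - domino Horizontal y = A \<union> B''" using x y less.prems(3) DB by auto
      have mv: "S' - domino Horizontal y \<in> moves Horizontal S'" using x y by (intro moves_I) auto
      have pB: "card (B - ?D) + 2 = card B" "finite (B - ?D)"
        using moves_props[OF \<open>B - ?D \<in> moves Vertical B\<close> less.prems(2)] by auto
      have pB'': "card B'' + 2 = card (B - ?D)" "finite B''" "B'' \<subseteq> B - ?D"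
        using moves_props[OF B''(1) pB(2)] by auto
      have "\<not> wins_first Vertical (A \<union> B'')"
        apply (rule less.hyps[of A B''])
        using pB pB'' less.prems B''(2) unfolding sep_def by auto
      then show "wins_first Horizontal S'" using wins_rec[of S' Horizontal] mv eq fin x by auto
    qed
  qed
  then show ?case using wins_rec[OF fin, of Vertical] by auto
qed

lemma sum_first:
  assumes "finite A" "finite B" "A \<inter> B = {}" "sep A B"
    "wins_first Horizontal A" "\<not> wins_first Vertical B"
  shows "wins_first Horizontal (A \<union> B)"
proof -
  obtain A'' where A'': "A'' \<in> moves Horizontal A" "\<not> wins_first Vertical A''"
    using wins_rec[OF assms(1), of Horizontal] assms(5) by auto
  then obtain y where y: "A'' = A - domino Horizontal y" "domino Horizontal y \<subseteq> A"
    unfolding moves_def by auto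
  have "\<not> wins_first Vertical (A'' \<union> B)"
    apply (rule sum_good) using assms A'' y unfolding sep_def by auto
  moreover have "A'' \<union> B = (A \<union> B) - domino Horizontal y"
    using y assms(3) by auto
  moreover have "(A \<union> B) - domino Horizontal y \<in> moves Horizontal (A \<union> B)"
    using y by (intro moves_I) auto
  ultimately show ?thesis using wins_rec[of "A \<union> B" Horizontal] assms by auto
qed


lemma card_diff_dom: "domino p x \<subseteq> L \<Longrightarrow> finite L \<Longrightarrow> card (L - domino p x) < card L"
proof -
  assume a: "domino p x \<subseteq> L" "finite L"
  have "card (L - domino p x) + 2 = card L" using moves_props[OF moves_I[OF a(1)] a(2)] by blast
  then show ?thesis by linarith
qed

definition rot :: "nat \<Rightarrow> cell \<Rightarrow> cell" where
  "rot m = (\<lambda>(r,c). (c, 2*m - 1 - r))"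

lemma rot_inj: "inj_on (rot m) (grid m m)"
  unfolding inj_on_def rot_def grid_def by auto

lemma rot_col: "x \<in> grid m m \<Longrightarrow> m \<le> snd (rot m x) \<and> snd (rot m x) < 2*m \<and> fst (rot m x) < m"
  unfolding rot_def grid_def by (cases x) auto

lemma rot_pre:
  assumes "L \<subseteq> grid m m" "(r,c) \<in> rot m ` L"
  shows "(2*m - 1 - c, r) \<in> L \<and> c < 2*m \<and> m \<le> c \<and> r < m"
proof -
  obtain a b where ab: "(a,b) \<in> L" "(r,c) = rot m (a,b)" using assms(2) by auto
  have "a < m" "b < m" using ab assms(1) by (auto simp: grid_def)
  then show ?thesis using ab by (auto simp: rot_def)
qed

lemma rot_claim:
  assumes "0 < m"
  shows "L \<subseteq> grid m m \<Longrightarrow> \<not> wins_first Vertical (L \<union> rot m ` L)"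
proof (induction "card L" arbitrary: L rule: less_induct)
  case less
  have finG: "finite (grid m m)"
  proof -
    have "grid m m \<subseteq> {..<m} \<times> {..<m}" by (auto simp: grid_def)
    then show ?thesis using finite_subset by blast
  qed
  have finL: "finite L" using less.prems finG finite_subset by blast
  have fin: "finite (L \<union> rot m ` L)" using finL by auto
  have injL: "inj_on (rot m) L" using rot_inj less.prems inj_on_subset by blast
  have colL: "\<forall>x\<in>L. snd x < m" using less.prems by (auto simp: grid_def)
  have colR: "\<forall>x\<in>rot m ` L. m \<le> snd x" using less.prems rot_col by blast
  have "\<forall>S'\<in>moves Vertical (L \<union> rot m ` L). wins_first Horizontal S'"
  proof
    fix S' assume "S' \<in> moves Vertical (L \<union> rot m ` L)"
    then obtain r c where x: "S' = (L \<union> rot m ` L) - domino Vertical (r,c)"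
        "domino Vertical (r,c) \<subseteq> L \<union> rot m ` L"
      unfolding moves_def by auto
    have finS': "finite S'" using x fin by auto
    have "sep L (rot m ` L)" unfolding sep_def using colL colR by fastforce
    from sep_V[OF this x(2)] show "wins_first Horizontal S'"
    proof
      assume DL: "domino Vertical (r,c) \<subseteq> L"
      let ?D = "domino Vertical (r,c)"
      let ?L' = "L - ?D"
      have rc: "(r,c) \<in> L" "(Suc r, c) \<in> L" using DL by auto
      then have bnd: "Suc r < m" "c < m" using less.prems by (auto simp: grid_def)
      let ?y = "(c, 2*m - 2 - r)"
      have rD: "rot m ` ?D = domino Horizontal ?y" using bnd by (auto simp: rot_def)
      have sub: "domino Horizontal ?y \<subseteq> S'"
      proof -
        have a1: "rot m ` ?D \<subseteq> rot m ` L" using DL by (rule image_mono)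
        have a2: "rot m ` ?D \<inter> ?D = {}" using bnd by (auto simp: rot_def)
        have "rot m ` ?D \<subseteq> S'" unfolding x(1) using a1 a2 by blast
        then show ?thesis unfolding rD .
      qed
      have eq: "S' - domino Horizontal ?y = ?L' \<union> rot m ` ?L'"
      proof -
        have "rot m ` ?L' = rot m ` L - rot m ` ?D"
          using injL DL by (simp add: inj_on_image_set_diff)
        moreover have "rot m ` L \<inter> ?D = {}"
        proof -
          have "\<forall>z\<in>?D. snd z < m" using bnd by auto
          then show ?thesis using colR by (meson disjoint_iff not_le)
        qed
        moreover have "L \<inter> rot m ` ?D = {}"
        proof -
          have "\<forall>z\<in>rot m ` ?D. m \<le> snd z" using bnd unfolding rD by auto
          then show ?thesis using colL by (meson disjoint_iff not_le)
        qed
        ultimately show ?thesis unfolding x(1) rD[symmetric] by blast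
      qed
      have "card ?L' < card L" using DL finL by (rule card_diff_dom)
      then have "\<not> wins_first Vertical (?L' \<union> rot m ` ?L')"
        using less.hyps less.prems by auto
      then show ?thesis using wins_rec[OF finS', of Horizontal] moves_I[OF sub] eq by auto
    next
      assume DR: "domino Vertical (r,c) \<subseteq> rot m ` L"
      let ?D = "domino Vertical (r,c)"
      have p1: "(2*m - 1 - c, r) \<in> L \<and> c < 2*m \<and> m \<le> c \<and> r < m"
        using rot_pre[OF less.prems] DR by auto
      have p2: "(2*m - 1 - c, Suc r) \<in> L \<and> c < 2*m \<and> m \<le> c \<and> Suc r < m"
        using rot_pre[OF less.prems, of "Suc r" c] DR by auto
      let ?y = "(2*m - 1 - c, r)"
      let ?E = "domino Horizontal ?y"
      have EL: "?E \<subseteq> L" using p1 p2 by auto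
      have rE: "rot m ` ?E = ?D" using p1 p2 by (auto simp: rot_def)
      let ?L' = "L - ?E"
      have sub: "?E \<subseteq> S'"
      proof -
        have "\<forall>z\<in>?D. m \<le> snd z" using p1 by auto
        then have "L \<inter> ?D = {}" using colL by (meson disjoint_iff not_le)
        then show ?thesis unfolding x(1) using EL by blast
      qed
      have eq: "S' - ?E = ?L' \<union> rot m ` ?L'"
      proof -
        have "rot m ` ?L' = rot m ` L - rot m ` ?E"
          using injL EL by (simp add: inj_on_image_set_diff)
        moreover have "rot m ` L \<inter> ?E = {}"
        proof -
          have "\<forall>z\<in>?E. snd z < m" using p1 p2 by auto
          then show ?thesis using colR by (meson disjoint_iff not_le)
        qed
        moreover have "L \<inter> ?D = {}"
        proof -
          have "\<forall>z\<in>?D. m \<le> snd z" using p1 by auto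
          then show ?thesis using colL by (meson disjoint_iff not_le)
        qed
        ultimately show ?thesis unfolding x(1) rE[symmetric] by blast
      qed
      have "card ?L' < card L" using EL finL by (rule card_diff_dom)
      then have "\<not> wins_first Vertical (?L' \<union> rot m ` ?L')"
        using less.hyps less.prems by auto
      then show ?thesis using wins_rec[OF finS', of Horizontal] moves_I[OF sub] eq by auto
    qed
  qed
  then show ?case using wins_rec[OF fin, of Vertical] by auto
qed


lemma grid_fin: "finite (grid m n)"
proof -
  have "grid m n \<subseteq> {..<m} \<times> {..<n}" by (auto simp: grid_def)
  then show ?thesis using finite_subset by blast
qed

lemma grid_split: "grid m (a+b) = grid m a \<union> sh a ` grid m b"
proof (rule set_eqI)
  fix z :: cell
  obtain r c where z: "z = (r,c)" by (cases z)
  show "z \<in> grid m (a+b) \<longleftrightarrow> z \<in> grid m a \<union> sh a ` grid m b"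
  proof
    assume "z \<in> grid m (a+b)"
    then have h: "r < m" "c < a + b" using z by (auto simp: grid_def)
    show "z \<in> grid m a \<union> sh a ` grid m b"
    proof (cases "c < a")
      case True then show ?thesis using h z by (auto simp: grid_def)
    next
      case False
      then have "z = sh a (r, c - a)" "(r, c-a) \<in> grid m b" using h z by (auto simp: sh_def grid_def)
      then show ?thesis by blast
    qed
  next
    assume "z \<in> grid m a \<union> sh a ` grid m b"
    then show "z \<in> grid m (a+b)" by (auto simp: grid_def sh_def)
  qed
qed

lemma grid_parts: "grid m a \<inter> sh a ` grid m b = {} \<and> sep (grid m a) (sh a ` grid m b)"
  by (auto simp: grid_def sh_def sep_def)

lemma G_add: "\<not> wins_first Vertical (grid m a) \<Longrightarrow> \<not> wins_first Vertical (grid m b)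
   \<Longrightarrow> \<not> wins_first Vertical (grid m (a+b))"
  unfolding grid_split
  apply (rule sum_good)
  using grid_fin grid_parts win_sh by auto

lemma P_add: "wins_first Horizontal (grid m a) \<Longrightarrow> \<not> wins_first Vertical (grid m b)
   \<Longrightarrow> wins_first Horizontal (grid m (a+b))"
  unfolding grid_split
  apply (rule sum_first)
  using grid_fin grid_parts win_sh by auto

lemma G_0: "\<not> wins_first Vertical (grid m 0)"
proof -
  have "grid m 0 = {}" by (auto simp: grid_def)
  then show ?thesis by (simp add: wins_first_def)
qed

lemma G_mult: "\<not> wins_first Vertical (grid m k) \<Longrightarrow> \<not> wins_first Vertical (grid m (c*k))"
proof (induction c)
  case 0 then show ?case using G_0 by simp
next
  case (Suc c)
  then show ?case using G_add[of m k "c*k"] by (simp add: add.commute)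
qed

lemma grid_2m: "grid m (2*m) = grid m m \<union> rot m ` grid m m"
proof (rule set_eqI)
  fix z :: cell
  obtain r c where z: "z = (r,c)" by (cases z)
  show "z \<in> grid m (2*m) \<longleftrightarrow> z \<in> grid m m \<union> rot m ` grid m m"
  proof
    assume "z \<in> grid m (2*m)"
    then have h: "r < m" "c < 2*m" using z by (auto simp: grid_def)
    show "z \<in> grid m m \<union> rot m ` grid m m"
    proof (cases "c < m")
      case True then show ?thesis using h z by (auto simp: grid_def)
    next
      case False
      then have "z = rot m (2*m - 1 - c, r)" "(2*m - 1 - c, r) \<in> grid m m"
        using h z by (auto simp: rot_def grid_def)
      then show ?thesis by blast
    qed
  next
    assume "z \<in> grid m m \<union> rot m ` grid m m"
    then show "z \<in> grid m (2*m)" by (auto simp: grid_def rot_def)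
  qed
qed

lemma P_2m:
  assumes "0 < m"
  shows "wins_first Horizontal (grid m (2*m)) \<and> \<not> wins_first Vertical (grid m (2*m))"
proof
  show "\<not> wins_first Vertical (grid m (2*m))"
    unfolding grid_2m using rot_claim[OF assms] by simp
next
  let ?L = "grid m m - {(m-1, m-1)}"
  let ?E = "domino Horizontal (m-1, m-1)"
  have rp: "rot m (m-1, m-1) = (m-1, m)" using assms by (auto simp: rot_def)
  have "rot m ` ?L = rot m ` grid m m - {rot m (m-1,m-1)}"
    using inj_on_image_set_diff[OF rot_inj[of m], of "grid m m" "{(m-1,m-1)}"] assms
    by (simp add: grid_def)
  then have rL: "rot m ` ?L = rot m ` grid m m - {(m-1, m)}" using rp by simp
  have E: "?E = {(m-1,m-1), (m-1,m)}" using assms by auto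
  have Esub: "?E \<subseteq> grid m (2*m)" using E assms by (auto simp: grid_def)
  have "(m-1,m) \<notin> grid m m" by (auto simp: grid_def)
  moreover have "(m-1,m-1) \<notin> rot m ` grid m m"
  proof
    assume "(m-1,m-1) \<in> rot m ` grid m m"
    then obtain z where "z \<in> grid m m" "rot m z = (m-1,m-1)" by auto
    then have "m \<le> m - 1" using rot_col[of z m] by auto
    then show False using assms by simp
  qed
  ultimately have eq: "grid m (2*m) - ?E = ?L \<union> rot m ` ?L"
    unfolding grid_2m rL E by blast
  have "\<not> wins_first Vertical (?L \<union> rot m ` ?L)" using rot_claim[OF assms, of ?L] by auto
  then show "wins_first Horizontal (grid m (2*m))"
    using wins_rec[OF grid_fin, of Horizontal m "2*m"] moves_I[OF Esub] eq by auto
qed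

theorem corollary3p3:
  fixes m j :: nat
  assumes "0 < m" and "0 < j"
    and "outcome (grid m j) \<in> {OutH, OutSecond}"
  shows "\<exists>N0::nat. \<forall>N\<ge>N0. outcome (grid m (N * gcd j (2 * m))) = OutH"
proof -
  have Gj: "\<not> wins_first Vertical (grid m j)"
    using assms(3) by (auto simp: outcome_def split: if_splits)
  have P2: "wins_first Horizontal (grid m (2*m))" "\<not> wins_first Vertical (grid m (2*m))"
    using P_2m[OF assms(1)] by auto
  define g where "g = gcd j (2*m)"
  obtain x y where xy: "j * x = (2*m) * y + g"
    using bezout_nat[of j "2*m"] assms(2) unfolding g_def by auto
  define K where "K = 2*m div g"
  have gdvd: "g dvd 2*m" unfolding g_def by simp
  have Kg: "K * g = 2*m" unfolding K_def using gdvd by simp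
  have Kpos: "0 < K" using Kg assms(1) by (cases K) auto
  show ?thesis
  proof (intro exI allI impI)
    fix N assume N: "K * (K*y + 1) \<le> N"
    define q where "q = N div K"
    define r where "r = N mod K"
    have rK: "r < K" unfolding r_def using Kpos by simp
    have "K * (K*y+1) div K \<le> N div K" using N by (rule div_le_mono)
    then have qb: "K*y + 1 \<le> q" unfolding q_def using Kpos by simp
    have "r*y \<le> K*y" using rK by simp
    define t where "t = q - r*y - 1"
    have t: "q = t + r*y + 1" unfolding t_def using qb \<open>r*y \<le> K*y\<close> by linarith
    have Ng: "N * g = q * (2*m) + r * g"
    proof -
      have "N = q*K + r" unfolding q_def r_def by simp
      then show ?thesis using Kg by (simp add: algebra_simps)
    qed
    have rx: "r * x * j = r * y * (2*m) + r * g"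
    proof -
      have "r * (j * x) = r * ((2*m)*y + g)" using xy by simp
      then show ?thesis by (simp add: algebra_simps)
    qed
    have dec: "N * g = (2*m + (r*x)*j) + t*(2*m)"
      using Ng rx t by (simp add: algebra_simps)
    have "wins_first Horizontal (grid m (2*m + (r*x)*j))"
      using P_add[OF P2(1) G_mult[OF Gj]] by blast
    then have H: "wins_first Horizontal (grid m (N*g))"
      unfolding dec using P_add G_mult[OF P2(2)] by blast
    have "\<not> wins_first Vertical (grid m (2*m + (r*x)*j))"
      using G_add[OF P2(2) G_mult[OF Gj]] by blast
    then have V: "\<not> wins_first Vertical (grid m (N*g))"
      unfolding dec using G_add G_mult[OF P2(2)] by blast
    show "outcome (grid m (N * gcd j (2 * m))) = OutH"
      using H V unfolding g_def by (simp add: outcome_def)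
  qed
qed

end
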